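(* Let $G=(V,E)$ be a finite undirected graph with $m=|E|\ge1$ edges, let $k_u$ denote the degree of node $u$, and let $G'$ be the random multigraph produced from $G$ by the configuration model (see context). Fix distinct nodes $i,j\in V$ with $k_i\ge1$ and $k_j\ge1$, and let $P_{ij}=\frac1{k_i}+\frac1{k_j}$. Let $W_{ij}$ be the random weight of the pair $(i,j)$ computed in $G'$ by the rule in the context. Write $P_{\mathrm{adj}}=\Pr(i \text{ and } j \text{ connected in } G')$, and for each $r\in V\setminus\{i,j\}$, $P_{\mathrm{cn}}(r)=\Pr(i \text{ and } r \text{ connected and } j \text{ and } r \text{ connected in } G')$ and $P_{\mathrm{tri}}(r)=\Pr(i,r \text{ connected},\ j,r \text{ connected, and } i,j \text{ connected in } G')$. Then: 1. If $k_i=1$ or $k_j=1$, \[ E[W_{ij}]=\frac{P_{ij}\sum_{r\in V\setminus\{i,j\}}P_{\mathrm{cn}}(r)}{4}+P_{ij}P_{\mathrm{adj}}. \] 2. If $k_i>1$ and $k_j>1$, \[ E[W_{ij}]=\frac{P_{ij}}{4}\sum_{r\in V\setminus\{i,j\}}\big(P_{\mathrm{cn}}(r)-P_{\mathrm{tri}}(r)\big)+2P_{ij}\sum_{r\in V\setminus\{i,j\}}P_{\mathrm{tri}}(r)+3P_{ij}P_{\mathrm{adj}}. \] Moreover, with the functions $A,C,T$ defined by $A(a,b,M)=\sum_{t=1}^{\min\{a,b\}}(-1)^{t+1}\frac{\binom{a}{t}\binom{b}{t}t!}{\prod_{p=1}^{t}(2M+1-2p)}$, $C(a,b,c,M)=\sum_{t=1}^{\min\{b,c-1\}}(-1)^{t+1}A(a,c-t,M-t)\frac{\binom{c}{t}\binom{b}{t}t!}{\prod_{p=1}^{t}(2M+1-2p)}$,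 $T(a,b,c,M)=\sum_{t=1}^{\min\{a-1,b-1\}}(-1)^{t+1}C(a-t,b-t,c,M-t)\frac{\binom{a}{t}\binom{b}{t}t!}{\prod_{p=1}^{t}(2M+1-2p)}$ (empty sums $=0$), one has $P_{\mathrm{adj}}=A(k_i,k_j,m)$, $P_{\mathrm{cn}}(r)=C(k_i,k_j,k_r,m)$ and $P_{\mathrm{tri}}(r)=T(k_i,k_j,k_r,m)$, so that the two expressions above give $E[W_{ij}]$ explicitly in terms of the degrees and $m$.
   Context: Configuration model: given $G=(V,E)$ with $m$ edges and degrees $k_u$, each node $u$ is given $k_u$ stubs (half-edges), $2m$ in total; a perfect matching of the $2m$ stubs is chosen uniformly at random among all $\prod_{p=1}^{m}(2m+1-2p)$ perfect matchings, and each matched pair of stubs (attached to nodes $u$ and $v$) becomes an edge of the random multigraph $G'$. Degrees are preserved. Two distinct nodes $u,v$ are connected in $G'$ if at least one stub of $u$ is matched with a stub of $v$. A node $r\notin\{i,j\}$ is a common neighbour of $i$ and $j$ if $r$ is connected to both $i$ and $j$. Weight rule (evaluated in $G'$, with degrees $k_i,k_j\ge 1$): let $P_{ij}=\frac1{k_i}+\frac1{k_j}$ and $CN_{ij}=(\text{number of common neighbours of } i,j+1)P_{ij}$. Then $W_{ij}=\frac{CN_{ij}-P_{ij}}{4}$ if $i$ and $j$ are not connected; $W_{ij}=P_{ij}$ if $i,j$ are connected and ($k_i=1$ or $k_j=1$); $W_{ij}=2CN_{ij}+P_{ij}$ if $i,j$ are connected and $k_i>1$, $k_j>1$. *)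

theory Defs
  imports "HOL-Probability.Probability_Mass_Function"
begin

definition deg :: "'a set \<Rightarrow> ('a \<Rightarrow> 'a \<Rightarrow> bool) \<Rightarrow> 'a \<Rightarrow> nat" where
  "deg V E u = card {v \<in> V. E u v}"

definition num_edges :: "'a set \<Rightarrow> ('a \<Rightarrow> 'a \<Rightarrow> bool) \<Rightarrow> nat" where
  "num_edges V E = card {{u, v} | u v. u \<in> V \<and> v \<in> V \<and> E u v}"

text \<open>Stubs (half-edges): node u carries stubs (u,0),...,(u,deg u - 1).\<close>
definition stubs :: "'a set \<Rightarrow> ('a \<Rightarrow> 'a \<Rightarrow> bool) \<Rightarrow> ('a \<times> nat) set" where
  "stubs V E = {(u, s). u \<in> V \<and> s < deg V E u}"

text \<open>Perfect matchings of the stubs, represented as fixed-point-free involutions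
on the stub set (identity outside it).\<close>
definition stub_matchings :: "'a set \<Rightarrow> ('a \<Rightarrow> 'a \<Rightarrow> bool) \<Rightarrow> (('a \<times> nat) \<Rightarrow> ('a \<times> nat)) set" where
  "stub_matchings V E =
     {f. (\<forall>x\<in>stubs V E. f x \<in> stubs V E \<and> f x \<noteq> x \<and> f (f x) = x) \<and>
         (\<forall>x. x \<notin> stubs V E \<longrightarrow> f x = x)}"

definition config_model :: "'a set \<Rightarrow> ('a \<Rightarrow> 'a \<Rightarrow> bool) \<Rightarrow> (('a \<times> nat) \<Rightarrow> ('a \<times> nat)) pmf" where
  "config_model V E = pmf_of_set (stub_matchings V E)"

definition cm_conn :: "'a set \<Rightarrow> ('a \<Rightarrow> 'a \<Rightarrow> bool) \<Rightarrow> (('a \<times> nat) \<Rightarrow> ('a \<times> nat)) \<Rightarrow> 'a \<Rightarrow> 'a \<Rightarrow> bool" where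
  "cm_conn V E f u v = (\<exists>s < deg V E u. \<exists>t < deg V E v. f (u, s) = (v, t))"

definition cm_common :: "'a set \<Rightarrow> ('a \<Rightarrow> 'a \<Rightarrow> bool) \<Rightarrow> (('a \<times> nat) \<Rightarrow> ('a \<times> nat)) \<Rightarrow> 'a \<Rightarrow> 'a \<Rightarrow> nat" where
  "cm_common V E f i j =
     card {r \<in> V. r \<noteq> i \<and> r \<noteq> j \<and> cm_conn V E f i r \<and> cm_conn V E f j r}"

definition Pij :: "'a set \<Rightarrow> ('a \<Rightarrow> 'a \<Rightarrow> bool) \<Rightarrow> 'a \<Rightarrow> 'a \<Rightarrow> real" where
  "Pij V E i j = 1 / real (deg V E i) + 1 / real (deg V E j)"

definition CNij :: "'a set \<Rightarrow> ('a \<Rightarrow> 'a \<Rightarrow> bool) \<Rightarrow> (('a \<times> nat) \<Rightarrow> ('a \<times> nat)) \<Rightarrow> 'a \<Rightarrow> 'a \<Rightarrow> real" where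
  "CNij V E f i j = (real (cm_common V E f i j) + 1) * Pij V E i j"

text \<open>Weight rule, evaluated in G' (degrees in G' equal those in G).\<close>
definition weight :: "'a set \<Rightarrow> ('a \<Rightarrow> 'a \<Rightarrow> bool) \<Rightarrow> (('a \<times> nat) \<Rightarrow> ('a \<times> nat)) \<Rightarrow> 'a \<Rightarrow> 'a \<Rightarrow> real" where
  "weight V E f i j =
     (if \<not> cm_conn V E f i j then (CNij V E f i j - Pij V E i j) / 4
      else if deg V E i = 1 \<or> deg V E j = 1 then Pij V E i j
      else 2 * CNij V E f i j + Pij V E i j)"

definition stubprod :: "nat \<Rightarrow> int \<Rightarrow> real" where
  "stubprod t M = (\<Prod>p = 1..t. real_of_int (2 * M + 1 - 2 * int p))"

definition fA :: "nat \<Rightarrow> nat \<Rightarrow> int \<Rightarrow> real" where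
  "fA a b M = (\<Sum>t = 1..min a b.
      (-1) ^ (t + 1) * (real (a choose t) * real (b choose t) * fact t) / stubprod t M)"

definition fC :: "nat \<Rightarrow> nat \<Rightarrow> nat \<Rightarrow> int \<Rightarrow> real" where
  "fC a b c M = (\<Sum>t = 1..min b (c - 1).
      (-1) ^ (t + 1) * fA a (c - t) (M - int t) *
      (real (c choose t) * real (b choose t) * fact t) / stubprod t M)"

definition fT :: "nat \<Rightarrow> nat \<Rightarrow> nat \<Rightarrow> int \<Rightarrow> real" where
  "fT a b c M = (\<Sum>t = 1..min (a - 1) (b - 1).
      (-1) ^ (t + 1) * fC (a - t) (b - t) c (M - int t) *
      (real (a choose t) * real (b choose t) * fact t) / stubprod t M)"

end

theory Submission
  imports Defs
begin

definition mt :: "'s set \<Rightarrow> ('s \<Rightarrow> 's) set" where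
  "mt S = {f. (\<forall>x\<in>S. f x \<in> S \<and> f x \<noteq> x \<and> f (f x) = x) \<and> (\<forall>x. x \<notin> S \<longrightarrow> f x = x)}"

definition cc :: "('s \<Rightarrow> 's) \<Rightarrow> 's set \<Rightarrow> 's set \<Rightarrow> bool" where
  "cc f X Y = (\<exists>x\<in>X. f x \<in> Y)"

definition restr :: "('s \<Rightarrow> 's) \<Rightarrow> 's set \<Rightarrow> 's \<Rightarrow> 's" where
  "restr f D = (\<lambda>z. if z \<in> D then z else f z)"

lemma mt_invol: "f \<in> mt S \<Longrightarrow> f (f x) = x"
  unfolding mt_def by (cases "x \<in> S") auto

lemma mt_in: "f \<in> mt S \<Longrightarrow> x \<in> S \<Longrightarrow> f x \<in> S"
  unfolding mt_def by auto

lemma mt_ne: "f \<in> mt S \<Longrightarrow> x \<in> S \<Longrightarrow> f x \<noteq> x"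
  unfolding mt_def by auto

lemma mt_out: "f \<in> mt S \<Longrightarrow> x \<notin> S \<Longrightarrow> f x = x"
  unfolding mt_def by auto

lemma finite_mt: assumes "finite S" shows "finite (mt S)"
proof (rule inj_on_finite[where f="\<lambda>f. restrict f S" and B="PiE S (\<lambda>_. S)"])
  show "inj_on (\<lambda>f. restrict f S) (mt S)"
  proof
    fix f g assume "f \<in> mt S" "g \<in> mt S" "restrict f S = restrict g S"
    show "f = g"
    proof
      fix z show "f z = g z"
      proof (cases "z \<in> S")
        case True then show ?thesis using fun_cong[OF \<open>restrict f S = restrict g S\<close>, of z] by simp
      next
        case False then show ?thesis using \<open>f \<in> mt S\<close> \<open>g \<in> mt S\<close> unfolding mt_def by simp
      qed
    qed
  qed
  show "(\<lambda>f. restrict f S) ` mt S \<subseteq> PiE S (\<lambda>_. S)" unfolding mt_def by (auto simp: PiE_iff)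
  show "finite (PiE S (\<lambda>_. S))" using assms by (simp add: finite_PiE)
qed

lemma mt_pair_card:
  assumes xy: "x \<in> S" "y \<in> S" "x \<noteq> y"
    and PQ: "\<And>f. f \<in> mt S \<Longrightarrow> f x = y \<Longrightarrow> P f = Q (restr f {x,y})"
  shows "card {f \<in> mt S. f x = y \<and> P f} = card {h \<in> mt (S - {x,y}). Q h}"
proof -
  let ?r = "\<lambda>f. restr f {x,y}"
  have inj: "inj_on ?r {f \<in> mt S. f x = y \<and> P f}"
  proof
    fix f g assume f: "f \<in> {f \<in> mt S. f x = y \<and> P f}" and g: "g \<in> {f \<in> mt S. f x = y \<and> P f}"
      and eq: "?r f = ?r g"
    have "f y = x" using f xy unfolding mt_def by auto
    moreover have "g y = x" using g xy unfolding mt_def by auto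
    show "f = g"
    proof
      fix z show "f z = g z"
      proof (cases "z \<in> {x,y}")
        case True then show ?thesis using f g \<open>f y = x\<close> \<open>g y = x\<close> by auto
      next
        case False then show ?thesis using fun_cong[OF eq, of z] unfolding restr_def by simp
      qed
    qed
  qed
  have img: "?r ` {f \<in> mt S. f x = y \<and> P f} = {h \<in> mt (S - {x,y}). Q h}"
  proof (intro equalityI subsetI)
    fix h assume "h \<in> ?r ` {f \<in> mt S. f x = y \<and> P f}"
    then obtain f where f: "f \<in> mt S" "f x = y" "P f" and h: "h = ?r f" by auto
    have fy: "f y = x" using f xy unfolding mt_def by auto
    have "h \<in> mt (S - {x,y})"
      unfolding mt_def h restr_def
    proof (intro CollectI conjI ballI allI impI)
      fix z assume z: "z \<in> S - {x,y}"
      have fz: "f z \<in> S" "f z \<noteq> z" "f (f z) = z" using f z unfolding mt_def by auto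
      have "f z \<noteq> x"
      proof
        assume "f z = x" then have "z = f x" using fz(3) by metis
        then show False using f(2) z by simp
      qed
      moreover have "f z \<noteq> y"
      proof
        assume "f z = y" then have "z = f y" using fz(3) by metis
        then show False using fy z by simp
      qed
      ultimately show "(if z \<in> {x, y} then z else f z) \<in> S - {x, y}"
        "(if z \<in> {x, y} then z else f z) \<noteq> z"
        "(if (if z \<in> {x, y} then z else f z) \<in> {x, y} then (if z \<in> {x, y} then z else f z)
          else f (if z \<in> {x, y} then z else f z)) = z" using z fz by auto
    next
      fix z assume "z \<notin> S - {x,y}"
      then show "(if z \<in> {x, y} then z else f z) = z" using f unfolding mt_def by auto
    qed
    then show "h \<in> {h \<in> mt (S - {x,y}). Q h}" using PQ f h by auto
  next
    fix h assume h: "h \<in> {h \<in> mt (S - {x,y}). Q h}"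
    define f where "f = h(x := y, y := x)"
    have hx: "h x = x" "h y = y" using h unfolding mt_def by auto
    have fm: "f \<in> mt S"
      unfolding mt_def f_def
    proof (intro CollectI conjI ballI allI impI)
      fix z assume z: "z \<in> S"
      show "(h(x := y, y := x)) z \<in> S" "(h(x := y, y := x)) z \<noteq> z"
        "(h(x := y, y := x)) ((h(x := y, y := x)) z) = z"
        using z h xy hx unfolding mt_def by auto
    next
      fix z assume "z \<notin> S" then show "(h(x := y, y := x)) z = z" using h xy unfolding mt_def by auto
    qed
    have fx: "f x = y" unfolding f_def using xy by auto
    have rf: "?r f = h" unfolding restr_def f_def using hx by auto
    have "P f" using PQ[OF fm fx] rf h by auto
    then show "h \<in> ?r ` {f \<in> mt S. f x = y \<and> P f}" using fm fx rf by force
  qed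
  show ?thesis using card_image[OF inj] img by simp
qed


fun NN :: "nat \<Rightarrow> nat" where
  "NN 0 = 1"
| "NN (Suc n) = (2 * n + 1) * NN n"

lemma NN_pos: "NN n > 0"
  by (induction n) auto

lemma card_fibers:
  assumes "finite A" "g ` A \<subseteq> T" "finite T"
  shows "card A = (\<Sum>y\<in>T. card {a\<in>A. g a = y})"
  using sum.group[of A T g "\<lambda>_. 1::nat"] assms by simp

lemma card_mt:
  assumes "finite S" "card S = 2 * n"
  shows "card (mt S) = NN n"
  using assms
proof (induction n arbitrary: S)
  case 0
  then have "S = {}" by simp
  then have "mt S = {id}" unfolding mt_def by auto
  then show ?case by simp
next
  case (Suc n)
  then obtain x where x: "x \<in> S" by (metis card.empty ex_in_conv mult_Suc_right nat.simps(3) add_2_eq_Suc)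
  have fin: "finite (mt S)" using finite_mt Suc.prems by blast
  have "card (mt S) = (\<Sum>y\<in>S - {x}. card {f\<in>mt S. f x = y})"
    by (rule card_fibers[OF fin]) (use x Suc.prems in \<open>auto simp: mt_def\<close>)
  also have "\<dots> = (\<Sum>y\<in>S - {x}. NN n)"
  proof (rule sum.cong[OF refl])
    fix y assume y: "y \<in> S - {x}"
    have "card {f\<in>mt S. f x = y} = card {f\<in>mt S. f x = y \<and> True}" by simp
    also have "\<dots> = card {h \<in> mt (S - {x,y}). True}"
      by (rule mt_pair_card) (use x y in auto)
    also have "\<dots> = card (mt (S - {x,y}))" by simp
    also have "\<dots> = NN n"
      by (rule Suc.IH) (use Suc.prems x y in \<open>auto simp: card_Diff_subset\<close>)
    finally show "card {f\<in>mt S. f x = y} = NN n" .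
  qed
  also have "\<dots> = (2 * n + 1) * NN n" using Suc.prems x by (simp add: card_Diff_singleton)
  finally show ?case by simp
qed


lemma choose_fact_step:
  "real c * (real ((c - 1) choose t) * fact t) = real (c choose Suc t) * fact (Suc t)"
proof (cases c)
  case 0 then show ?thesis by simp
next
  case (Suc c')
  have "Suc t * (Suc c' choose Suc t) = Suc c' * (c' choose t)" by (rule Suc_times_binomial)
  then have eq: "real (Suc t) * real (Suc c' choose Suc t) = real (Suc c') * real (c' choose t)"
    by (metis of_nat_mult)
  have "real c * (real ((c - 1) choose t) * fact t) = (real (Suc c') * real (c' choose t)) * fact t"
    using Suc by simp
  also have "\<dots> = (real (Suc t) * real (Suc c' choose Suc t)) * fact t" using eq by simp
  also have "\<dots> = real (c choose Suc t) * fact (Suc t)"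
    unfolding fact_Suc Suc by (simp only: mult_ac)
  finally show ?thesis .
qed

lemma into_count:
  fixes Inv :: "'s set \<Rightarrow> 's set \<Rightarrow> 's set \<Rightarrow> bool"
    and Q :: "'s set \<Rightarrow> 's set \<Rightarrow> ('s \<Rightarrow> 's) \<Rightarrow> bool" and K :: "nat \<Rightarrow> nat \<Rightarrow> real"
  assumes inv_basic: "\<And>S A Y. Inv S A Y \<Longrightarrow> finite S \<and> A \<subseteq> S \<and> Y \<subseteq> S \<and> A \<inter> Y = {}"
    and inv_step: "\<And>S A Y x y. Inv S A Y \<Longrightarrow> x \<in> A \<Longrightarrow> y \<in> Y \<Longrightarrow> Inv (S - {x,y}) (A - {x}) (Y - {y})"
    and Q_step: "\<And>S A Y x y f. Inv S A Y \<Longrightarrow> x \<in> A \<Longrightarrow> y \<in> Y \<Longrightarrow> f \<in> mt S \<Longrightarrow> f x = y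
        \<Longrightarrow> Q A Y f = Q (A - {x}) (Y - {y}) (restr f {x,y})"
    and base: "\<And>S Y M. Inv S {} Y \<Longrightarrow> card S = 2 * M \<Longrightarrow> real (card {f\<in>mt S. Q {} Y f}) = K (card Y) M"
  shows "Inv S A Y \<Longrightarrow> card S = 2 * M \<Longrightarrow> card A = t \<Longrightarrow>
    real (card {f\<in>mt S. (\<forall>x\<in>A. f x \<in> Y) \<and> Q A Y f}) = real (card Y choose t) * fact t * K (card Y - t) (M - t)"
proof (induction t arbitrary: S A Y M)
  case 0
  have "finite A" using inv_basic[OF 0(1)] finite_subset by blast
  then have "A = {}" using 0 by simp
  then show ?case using base[OF _ 0(2)] 0(1) by simp
next
  case (Suc t)
  have ib: "finite S" "A \<subseteq> S" "Y \<subseteq> S" "A \<inter> Y = {}" using inv_basic[OF Suc.prems(1)] by auto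
  obtain x0 where x0: "x0 \<in> A" using Suc.prems(3) by (metis card.empty ex_in_conv nat.simps(3))
  define F where "F = {f\<in>mt S. (\<forall>x\<in>A. f x \<in> Y) \<and> Q A Y f}"
  have finF: "finite F" unfolding F_def using finite_mt[OF ib(1)] by simp
  have finY: "finite Y" using ib finite_subset by blast
  have "card F = (\<Sum>y\<in>Y. card {f\<in>F. f x0 = y})"
    by (rule card_fibers[OF finF]) (use x0 finY in \<open>auto simp: F_def\<close>)
  also have "\<dots> = (\<Sum>y\<in>Y. card {h\<in>mt (S - {x0,y}). (\<forall>x\<in>A - {x0}. h x \<in> Y - {y}) \<and> Q (A - {x0}) (Y - {y}) h})"
  proof (rule sum.cong[OF refl])
    fix y assume y: "y \<in> Y"
    have seteq: "{f\<in>F. f x0 = y} = {f\<in>mt S. f x0 = y \<and> ((\<forall>x\<in>A. f x \<in> Y) \<and> Q A Y f)}"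
      unfolding F_def by auto
    have "card {f\<in>mt S. f x0 = y \<and> ((\<forall>x\<in>A. f x \<in> Y) \<and> Q A Y f)} = card {h\<in>mt (S - {x0,y}). (\<forall>x\<in>A - {x0}. h x \<in> Y - {y}) \<and> Q (A - {x0}) (Y - {y}) h}"
    proof (rule mt_pair_card)
      show "x0 \<in> S" "y \<in> S" "x0 \<noteq> y" using x0 y ib by auto
    next
      fix f assume f: "f \<in> mt S" "f x0 = y"
      have fy: "f y = x0" using mt_invol[OF f(1), of x0] f(2) by simp
      have "(\<forall>x\<in>A. f x \<in> Y) = (\<forall>x\<in>A - {x0}. restr f {x0, y} x \<in> Y - {y})"
      proof
        assume h: "\<forall>x\<in>A. f x \<in> Y"
        show "\<forall>x\<in>A - {x0}. restr f {x0, y} x \<in> Y - {y}"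
        proof
          fix x assume x: "x \<in> A - {x0}"
          have "x \<noteq> y" using x y ib by auto
          moreover have "f x \<noteq> y"
          proof
            assume "f x = y"
            then have "f (f x) = x0" using fy by simp
            moreover have "f (f x) = x" using mt_invol[OF f(1)] by simp
            ultimately show False using x by simp
          qed
          ultimately show "restr f {x0, y} x \<in> Y - {y}" using h x unfolding restr_def by auto
        qed
      next
        assume h: "\<forall>x\<in>A - {x0}. restr f {x0, y} x \<in> Y - {y}"
        show "\<forall>x\<in>A. f x \<in> Y"
        proof
          fix x assume x: "x \<in> A"
          show "f x \<in> Y"
          proof (cases "x = x0")
            case True then show ?thesis using f y by simp
          next
            case False
            have "x \<noteq> y" using x y ib by auto
            have "restr f {x0, y} x \<in> Y - {y}" using h x False by blast
            then show ?thesis using \<open>x \<noteq> y\<close> False unfolding restr_def by auto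
          qed
        qed
      qed
      moreover have "Q A Y f = Q (A - {x0}) (Y - {y}) (restr f {x0, y})"
        by (rule Q_step[OF Suc.prems(1) x0 y f])
      ultimately show "((\<forall>x\<in>A. f x \<in> Y) \<and> Q A Y f) =
        ((\<forall>x\<in>A - {x0}. restr f {x0, y} x \<in> Y - {y}) \<and> Q (A - {x0}) (Y - {y}) (restr f {x0, y}))"
        by simp
    qed
    then show "card {f\<in>F. f x0 = y} = card {h\<in>mt (S - {x0,y}). (\<forall>x\<in>A - {x0}. h x \<in> Y - {y}) \<and> Q (A - {x0}) (Y - {y}) h}" unfolding seteq .
  qed
  finally have c1: "real (card F) = (\<Sum>y\<in>Y. real (card {h\<in>mt (S - {x0,y}). (\<forall>x\<in>A - {x0}. h x \<in> Y - {y}) \<and> Q (A - {x0}) (Y - {y}) h}))"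
    by (simp add: of_nat_sum)
  also have "\<dots> = (\<Sum>y\<in>Y. real ((card Y - 1) choose t) * fact t * K (card Y - 1 - t) (M - 1 - t))"
  proof (rule sum.cong[OF refl])
    fix y assume y: "y \<in> Y"
    have ne: "x0 \<noteq> y" using x0 y ib by auto
    have sub: "{x0,y} \<subseteq> S" using x0 y ib by auto
    have "card (S - {x0,y}) = card S - card {x0,y}"
      using card_Diff_subset[OF _ sub] by simp
    then have cS: "card (S - {x0,y}) = 2 * (M - 1)"
      using Suc.prems(2) ne by simp
    have cA: "card (A - {x0}) = t" using Suc.prems(3) x0 by (simp add: card_Diff_singleton)
    have cY: "card (Y - {y}) = card Y - 1" using y finY by (simp add: card_Diff_singleton)
    show "real (card {h\<in>mt (S - {x0,y}). (\<forall>x\<in>A - {x0}. h x \<in> Y - {y}) \<and> Q (A - {x0}) (Y - {y}) h}) =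
        real ((card Y - 1) choose t) * fact t * K (card Y - 1 - t) (M - 1 - t)"
      using Suc.IH[OF inv_step[OF Suc.prems(1) x0 y] cS cA] cY by simp
  qed
  also have "\<dots> = real (card Y) * (real ((card Y - 1) choose t) * fact t) * K (card Y - Suc t) (M - Suc t)"
    by (simp add: mult.assoc)
  also have "\<dots> = real (card Y choose Suc t) * fact (Suc t) * K (card Y - Suc t) (M - Suc t)"
    by (simp only: choose_fact_step)
  finally show ?case unfolding F_def .
qed


lemma ie_count:
  assumes S: "finite S" and X: "finite X"
  shows "real (card {f\<in>mt S. cc f X Y \<and> Q f}) =
    (\<Sum>B | B \<subseteq> X \<and> B \<noteq> {}. (-1) ^ (card B + 1) * real (card {f\<in>mt S. (\<forall>x\<in>B. f x \<in> Y) \<and> Q f}))"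
proof -
  define F where "F = {f\<in>mt S. Q f}"
  have finF: "finite F" unfolding F_def using finite_mt[OF S] by simp
  define g where "g = (\<lambda>T. real (card (T \<inter> F)))"
  have add: "g (U \<union> T) = g U + g T" if "disjnt U T" for U T
  proof -
    have "(U \<union> T) \<inter> F = (U \<inter> F) \<union> (T \<inter> F)" by auto
    moreover have "card ((U \<inter> F) \<union> (T \<inter> F)) = card (U \<inter> F) + card (T \<inter> F)"
      by (rule card_Un_disjoint) (use finF that in \<open>auto simp: disjnt_def\<close>)
    ultimately show ?thesis unfolding g_def by simp
  qed
  have ie: "g (\<Union> ((\<lambda>x. {f. f x \<in> Y}) ` X)) =
      (\<Sum>B | B \<subseteq> X \<and> B \<noteq> {}. (-1) ^ (card B + 1) * g (\<Inter> ((\<lambda>x. {f. f x \<in> Y}) ` B)))"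
    by (rule Incl_Excl_UN[of g X "\<lambda>x. {f. f x \<in> Y}"]) (use add X in auto)
  have l: "\<Union> ((\<lambda>x. {f. f x \<in> Y}) ` X) \<inter> F = {f\<in>mt S. cc f X Y \<and> Q f}"
    unfolding F_def cc_def by auto
  have r: "\<Inter> ((\<lambda>x. {f. f x \<in> Y}) ` B) \<inter> F = {f\<in>mt S. (\<forall>x\<in>B. f x \<in> Y) \<and> Q f}" if "B \<noteq> {}" for B
    unfolding F_def using that by auto
  have "g (\<Union> ((\<lambda>x. {f. f x \<in> Y}) ` X)) = real (card {f\<in>mt S. cc f X Y \<and> Q f})"
    unfolding g_def l ..
  moreover have "(\<Sum>B | B \<subseteq> X \<and> B \<noteq> {}. (-1) ^ (card B + 1) * g (\<Inter> ((\<lambda>x. {f. f x \<in> Y}) ` B)))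
     = (\<Sum>B | B \<subseteq> X \<and> B \<noteq> {}. (-1) ^ (card B + 1) * real (card {f\<in>mt S. (\<forall>x\<in>B. f x \<in> Y) \<and> Q f}))"
    by (rule sum.cong[OF refl]) (simp add: g_def r)
  ultimately show ?thesis using ie by simp
qed

lemma sum_subsets_card:
  fixes h :: "nat \<Rightarrow> real"
  assumes X: "finite X"
  shows "(\<Sum>B | B \<subseteq> X \<and> B \<noteq> {}. h (card B)) = (\<Sum>t=1..card X. real (card X choose t) * h t)"
proof -
  have fin: "finite {B. B \<subseteq> X \<and> B \<noteq> {}}" using X by simp
  have img: "card ` {B. B \<subseteq> X \<and> B \<noteq> {}} \<subseteq> {1..card X}"
  proof
    fix t assume "t \<in> card ` {B. B \<subseteq> X \<and> B \<noteq> {}}"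
    then obtain B where B: "B \<subseteq> X" "B \<noteq> {}" "t = card B" by auto
    have "finite B" using B X finite_subset by blast
    then show "t \<in> {1..card X}" using B card_mono[OF X B(1)] by (auto simp: Suc_le_eq card_gt_0_iff)
  qed
  have "(\<Sum>B | B \<subseteq> X \<and> B \<noteq> {}. h (card B)) =
      (\<Sum>t\<in>{1..card X}. \<Sum>B\<in>{B. B \<in> {B. B \<subseteq> X \<and> B \<noteq> {}} \<and> card B = t}. h (card B))"
    by (rule sum.group[OF fin _ img, symmetric]) simp
  also have "\<dots> = (\<Sum>t=1..card X. real (card X choose t) * h t)"
  proof (rule sum.cong[OF refl])
    fix t assume t: "t \<in> {1..card X}"
    have eq: "{B. B \<in> {B. B \<subseteq> X \<and> B \<noteq> {}} \<and> card B = t} = {B. B \<subseteq> X \<and> card B = t}"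
      using t by auto
    show "(\<Sum>B\<in>{B. B \<in> {B. B \<subseteq> X \<and> B \<noteq> {}} \<and> card B = t}. h (card B)) = real (card X choose t) * h t"
      unfolding eq using n_subsets[OF X, of t] by simp
  qed
  finally show ?thesis .
qed


definition HH :: "nat \<Rightarrow> nat \<Rightarrow> (nat \<Rightarrow> nat \<Rightarrow> nat \<Rightarrow> real) \<Rightarrow> nat \<Rightarrow> real" where
  "HH a b K M = (\<Sum>t=1..a. (-1) ^ (t + 1) * real (a choose t) * real (b choose t) * fact t * K t (b - t) (M - t))"

lemma ie_into:
  assumes S: "finite S" and X: "X \<subseteq> S"
    and into: "\<And>B. B \<subseteq> X \<Longrightarrow> B \<noteq> {} \<Longrightarrow> real (card {f\<in>mt S. (\<forall>x\<in>B. f x \<in> Y) \<and> Q f}) =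
        real (card Y choose card B) * fact (card B) * K (card B) (card Y - card B) (M - card B)"
  shows "real (card {f\<in>mt S. cc f X Y \<and> Q f}) = HH (card X) (card Y) K M"
proof -
  have finX: "finite X" using S X finite_subset by blast
  have "real (card {f\<in>mt S. cc f X Y \<and> Q f}) =
    (\<Sum>B | B \<subseteq> X \<and> B \<noteq> {}. (-1) ^ (card B + 1) * real (card {f\<in>mt S. (\<forall>x\<in>B. f x \<in> Y) \<and> Q f}))"
    by (rule ie_count[OF S finX])
  also have "\<dots> = (\<Sum>B | B \<subseteq> X \<and> B \<noteq> {}. (\<lambda>t. (-1) ^ (t + 1) * (real (card Y choose t) * fact t * K t (card Y - t) (M - t))) (card B))"
    by (rule sum.cong[OF refl]) (simp add: into)
  also have "\<dots> = (\<Sum>t=1..card X. real (card X choose t) * ((-1) ^ (t + 1) * (real (card Y choose t) * fact t * K t (card Y - t) (M - t))))"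
    by (rule sum_subsets_card[OF finX])
  also have "\<dots> = HH (card X) (card Y) K M"
    unfolding HH_def by (rule sum.cong[OF refl]) (simp only: mult_ac)
  finally show ?thesis .
qed

lemma stubprod_Suc: "stubprod (Suc t) M = stubprod t M * real_of_int (2 * M + 1 - 2 * int (Suc t))"
  unfolding stubprod_def by (simp add: prod.cl_ivl_Suc)

lemma stubprod_pos: "t \<le> M \<Longrightarrow> stubprod t (int M) > 0"
  unfolding stubprod_def by (rule prod_pos) auto

lemma stubprod_NN: "t \<le> M \<Longrightarrow> stubprod t (int M) * real (NN (M - t)) = real (NN M)"
proof (induction t)
  case 0 then show ?case by (simp add: stubprod_def)
next
  case (Suc t)
  have "M - t = Suc (M - Suc t)" using Suc.prems by simp
  then have "NN (M - t) = (2 * (M - Suc t) + 1) * NN (M - Suc t)" by simp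
  then have e: "real (NN (M - t)) = real (2 * (M - Suc t) + 1) * real (NN (M - Suc t))"
    by (metis of_nat_mult)
  have f: "real_of_int (2 * int M + 1 - 2 * int (Suc t)) = real (2 * (M - Suc t) + 1)"
    using Suc.prems by (simp add: of_nat_diff)
  have IH: "stubprod t (int M) * real (NN (M - t)) = real (NN M)" using Suc by simp
  have "stubprod (Suc t) (int M) * real (NN (M - Suc t)) =
      stubprod t (int M) * (real (2 * (M - Suc t) + 1) * real (NN (M - Suc t)))"
    unfolding stubprod_Suc f by (simp only: mult_ac)
  also have "\<dots> = real (NN M)" unfolding e[symmetric] by (rule IH)
  finally show ?case .
qed

lemma HH_conv:
  assumes L: "L \<le> a" and LM: "\<And>t. t \<le> L \<Longrightarrow> t \<le> M"
    and zero: "\<And>t. L < t \<Longrightarrow> t \<le> a \<Longrightarrow> real (b choose t) * K t (b - t) (M - t) = 0"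
    and Kf: "\<And>t. 1 \<le> t \<Longrightarrow> t \<le> L \<Longrightarrow> K t (b - t) (M - t) = G t * real (NN (M - t))"
  shows "HH a b K M = (\<Sum>t=1..L. (-1) ^ (t + 1) * G t * (real (a choose t) * real (b choose t) * fact t) / stubprod t (int M)) * real (NN M)"
proof -
  have "HH a b K M = (\<Sum>t=1..L. (-1) ^ (t + 1) * real (a choose t) * real (b choose t) * fact t * K t (b - t) (M - t))"
    unfolding HH_def
  proof (rule sum.mono_neutral_right)
    show "finite {1..a}" by simp
    show "{1..L} \<subseteq> {1..a}" using L by auto
    show "\<forall>i\<in>{1..a} - {1..L}. (-1) ^ (i + 1) * real (a choose i) * real (b choose i) * fact i * K i (b - i) (M - i) = 0"
    proof
      fix i assume i: "i \<in> {1..a} - {1..L}"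
      then have "L < i" "i \<le> a" by auto
      then have "real (b choose i) * K i (b - i) (M - i) = 0" using zero by blast
      then show "(-1) ^ (i + 1) * real (a choose i) * real (b choose i) * fact i * K i (b - i) (M - i) = 0"
        by (metis (no_types, lifting) mult.commute mult.left_commute mult_zero_left)
    qed
  qed
  also have "\<dots> = (\<Sum>t=1..L. (-1) ^ (t + 1) * G t * (real (a choose t) * real (b choose t) * fact t) / stubprod t (int M) * real (NN M))"
  proof (rule sum.cong[OF refl])
    fix t assume t: "t \<in> {1..L}"
    have tM: "t \<le> M" using LM t by auto
    have sp: "stubprod t (int M) > 0" using stubprod_pos[OF tM] .
    have nn: "real (NN M) = stubprod t (int M) * real (NN (M - t))" using stubprod_NN[OF tM] by simp
    have kf: "K t (b - t) (M - t) = G t * real (NN (M - t))" using Kf t by auto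
    show "(-1) ^ (t + 1) * real (a choose t) * real (b choose t) * fact t * K t (b - t) (M - t) =
        (-1) ^ (t + 1) * G t * (real (a choose t) * real (b choose t) * fact t) / stubprod t (int M) * real (NN M)"
      unfolding nn kf using sp by (simp add: field_simps)
  qed
  also have "\<dots> = (\<Sum>t=1..L. (-1) ^ (t + 1) * G t * (real (a choose t) * real (b choose t) * fact t) / stubprod t (int M)) * real (NN M)"
    by (simp add: sum_distrib_right)
  finally show ?thesis .
qed


lemma card_disj_le:
  assumes "finite S" "X \<subseteq> S" "Y \<subseteq> S" "X \<inter> Y = {}"
  shows "card X + card Y \<le> card S"
proof -
  have "card X + card Y = card (X \<union> Y)"
    using assms by (metis card_Un_disjoint finite_subset)
  also have "\<dots> \<le> card S" using assms by (intro card_mono) auto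
  finally show ?thesis .
qed

lemma thmA0:
  assumes S: "finite S" "card S = 2 * M" "X \<subseteq> S" "Y \<subseteq> S" "X \<inter> Y = {}"
  shows "real (card {f\<in>mt S. cc f X Y}) = HH (card X) (card Y) (\<lambda>_ _ M'. real (NN M')) M"
proof -
  let ?Inv = "\<lambda>S A Y. finite S \<and> A \<subseteq> S \<and> Y \<subseteq> S \<and> A \<inter> Y = {}"
  have "real (card {f\<in>mt S. cc f X Y \<and> True}) = HH (card X) (card Y) (\<lambda>_ _ M'. real (NN M')) M"
  proof (rule ie_into[OF S(1) S(3)])
    fix B assume B: "B \<subseteq> X" "B \<noteq> {}"
    have inv: "?Inv S B Y" using B S by auto
    have "real (card {f\<in>mt S. (\<forall>x\<in>B. f x \<in> Y) \<and> (\<lambda>_ _ _. True) B Y f}) =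
        real (card Y choose card B) * fact (card B) * (\<lambda>_ M'. real (NN M')) (card Y - card B) (M - card B)"
    proof (rule into_count[where Inv = ?Inv and Q = "\<lambda>_ _ _. True"])
      show "?Inv S B Y" by (rule inv)
      show "card S = 2 * M" by (rule S(2))
    next
      fix S' Y' M' assume "?Inv S' {} Y'" "card S' = 2 * M'"
      then show "real (card {f\<in>mt S'. True}) = real (NN M')" using card_mt[of S' M'] by simp
    qed auto
    then show "real (card {f\<in>mt S. (\<forall>x\<in>B. f x \<in> Y) \<and> True}) =
        real (card Y choose card B) * fact (card B) * (\<lambda>_ _ M'. real (NN M')) (card B) (card Y - card B) (M - card B)"
      by simp
  qed
  then show ?thesis by simp
qed

lemma thmA:
  assumes S: "finite S" "card S = 2 * M" "X \<subseteq> S" "Y \<subseteq> S" "X \<inter> Y = {}"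
  shows "real (card {f\<in>mt S. cc f X Y}) = fA (card X) (card Y) (int M) * real (NN M)"
proof -
  have le: "card X + card Y \<le> 2 * M" using card_disj_le[OF S(1,3,4,5)] S(2) by simp
  have "HH (card X) (card Y) (\<lambda>_ _ M'. real (NN M')) M =
    (\<Sum>t=1..min (card X) (card Y). (-1) ^ (t + 1) * (\<lambda>_. 1) t * (real (card X choose t) * real (card Y choose t) * fact t) / stubprod t (int M)) * real (NN M)"
    by (rule HH_conv) (use le in auto)
  also have "\<dots> = fA (card X) (card Y) (int M) * real (NN M)"
    unfolding fA_def by simp
  finally show ?thesis using thmA0[OF S] by simp
qed


lemma thmC0:
  assumes S: "finite S" "card S = 2 * M" "X \<subseteq> S" "Y \<subseteq> S" "Z \<subseteq> S"
    and D: "X \<inter> Y = {}" "X \<inter> Z = {}" "Y \<inter> Z = {}"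
  shows "real (card {f\<in>mt S. cc f X Z \<and> cc f Y Z}) =
    HH (card Y) (card Z) (\<lambda>_ c' M'. fA (card X) c' (int M') * real (NN M')) M"
proof -
  let ?Inv = "\<lambda>S A Z. finite S \<and> A \<subseteq> S \<and> Z \<subseteq> S \<and> X \<subseteq> S \<and> A \<inter> Z = {} \<and> X \<inter> A = {} \<and> X \<inter> Z = {}"
  let ?K = "\<lambda>c' M'. fA (card X) c' (int M') * real (NN M')"
  have eq: "{f\<in>mt S. cc f X Z \<and> cc f Y Z} = {f\<in>mt S. cc f Y Z \<and> cc f X Z}" by auto
  have "real (card {f\<in>mt S. cc f Y Z \<and> cc f X Z}) = HH (card Y) (card Z) (\<lambda>_ c' M'. ?K c' M') M"
  proof (rule ie_into[OF S(1) S(4)])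
    fix B assume B: "B \<subseteq> Y" "B \<noteq> {}"
    have inv: "?Inv S B Z" using B S D by auto
    have "real (card {f\<in>mt S. (\<forall>x\<in>B. f x \<in> Z) \<and> (\<lambda>_ Z' f. cc f X Z') B Z f}) =
        real (card Z choose card B) * fact (card B) * ?K (card Z - card B) (M - card B)"
    proof (rule into_count[where Inv = ?Inv and Q = "\<lambda>_ Z' f. cc f X Z'"])
      show "?Inv S B Z" by (rule inv)
      show "card S = 2 * M" by (rule S(2))
    next
      fix S' A' Z' x z f assume I: "?Inv S' A' Z'" and x: "x \<in> A'" and z: "z \<in> Z'" and f: "f \<in> mt S'" "f x = z"
      have fz: "f z = x" using mt_invol[OF f(1), of x] f(2) by simp
      show "cc f X Z' = cc (restr f {x, z}) X (Z' - {z})"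
      proof
        assume "cc f X Z'"
        then obtain w where w: "w \<in> X" "f w \<in> Z'" unfolding cc_def by auto
        have wn: "w \<notin> {x, z}" using w I x z by auto
        have "f w \<noteq> z"
        proof
          assume "f w = z"
          then have "w = x" using mt_invol[OF f(1), of w] fz by simp
          then show False using wn by simp
        qed
        then show "cc (restr f {x, z}) X (Z' - {z})" unfolding cc_def restr_def using w wn by auto
      next
        assume "cc (restr f {x, z}) X (Z' - {z})"
        then obtain w where w: "w \<in> X" "restr f {x, z} w \<in> Z' - {z}" unfolding cc_def by auto
        have wn: "w \<notin> {x, z}" using w I x z by auto
        then show "cc f X Z'" unfolding cc_def using w unfolding restr_def by auto
      qed
    next
      fix S' Z' M' assume I: "?Inv S' {} Z'" "card S' = 2 * M'"
      then show "real (card {f\<in>mt S'. cc f X Z'}) = ?K (card Z') M'"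
        using thmA[of S' M' X Z'] by auto
    qed auto
    then show "real (card {f\<in>mt S. (\<forall>x\<in>B. f x \<in> Z) \<and> cc f X Z}) =
        real (card Z choose card B) * fact (card B) * (\<lambda>_ c' M'. ?K c' M') (card B) (card Z - card B) (M - card B)"
      by simp
  qed
  then show ?thesis unfolding eq by simp
qed

lemma thmC:
  assumes S: "finite S" "card S = 2 * M" "X \<subseteq> S" "Y \<subseteq> S" "Z \<subseteq> S"
    and D: "X \<inter> Y = {}" "X \<inter> Z = {}" "Y \<inter> Z = {}"
  shows "real (card {f\<in>mt S. cc f X Z \<and> cc f Y Z}) = fC (card X) (card Y) (card Z) (int M) * real (NN M)"
proof -
  have le: "card Y + card Z \<le> 2 * M" using card_disj_le[OF S(1,4,5) D(3)] S(2) by simp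
  have "HH (card Y) (card Z) (\<lambda>_ c' M'. fA (card X) c' (int M') * real (NN M')) M =
    (\<Sum>t=1..min (card Y) (card Z - 1). (-1) ^ (t + 1) * (\<lambda>t. fA (card X) (card Z - t) (int M - int t)) t
       * (real (card Y choose t) * real (card Z choose t) * fact t) / stubprod t (int M)) * real (NN M)"
  proof (rule HH_conv)
    fix t assume t: "min (card Y) (card Z - 1) < t" "t \<le> card Y"
    show "real (card Z choose t) * (fA (card X) (card Z - t) (int (M - t)) * real (NN (M - t))) = 0"
    proof (cases "t = card Z")
      case True then show ?thesis by (simp add: fA_def)
    next
      case False then have "card Z < t" using t by auto
      then show ?thesis by simp
    qed
  next
    fix t assume t: "1 \<le> t" "t \<le> min (card Y) (card Z - 1)"
    then have "t \<le> M" using le by auto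
    then show "fA (card X) (card Z - t) (int (M - t)) * real (NN (M - t)) =
        fA (card X) (card Z - t) (int M - int t) * real (NN (M - t))" by (simp add: of_nat_diff)
  qed (use le in auto)
  also have "\<dots> = fC (card X) (card Y) (card Z) (int M) * real (NN M)"
    unfolding fC_def by (simp add: ac_simps)
  finally show ?thesis using thmC0[OF S D] by simp
qed


lemma thmT0:
  assumes S: "finite S" "card S = 2 * M" "X \<subseteq> S" "Y \<subseteq> S" "Z \<subseteq> S"
    and D: "X \<inter> Y = {}" "X \<inter> Z = {}" "Y \<inter> Z = {}"
  shows "real (card {f\<in>mt S. cc f X Z \<and> cc f Y Z \<and> cc f X Y}) =
    HH (card X) (card Y) (\<lambda>t b' M'. fC (card X - t) b' (card Z) (int M') * real (NN M')) M"
proof -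
  have finX: "finite X" using S finite_subset by blast
  have eq: "{f\<in>mt S. cc f X Z \<and> cc f Y Z \<and> cc f X Y} = {f\<in>mt S. cc f X Y \<and> (cc f X Z \<and> cc f Y Z)}" by auto
  have "real (card {f\<in>mt S. cc f X Y \<and> (cc f X Z \<and> cc f Y Z)}) =
      HH (card X) (card Y) (\<lambda>t b' M'. fC (card X - t) b' (card Z) (int M') * real (NN M')) M"
  proof (rule ie_into[OF S(1) S(3)])
    fix B assume B: "B \<subseteq> X" "B \<noteq> {}"
    define R where "R = X - B"
    have BR: "B \<union> R = X" using B unfolding R_def by auto
    have cR: "card R = card X - card B" unfolding R_def using B finX by (simp add: card_Diff_subset finite_subset)
    let ?Inv = "\<lambda>S A Y. finite S \<and> A \<subseteq> S \<and> Y \<subseteq> S \<and> R \<subseteq> S \<and> Z \<subseteq> S \<and> A \<inter> Y = {} \<and>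
       A \<inter> R = {} \<and> A \<inter> Z = {} \<and> Y \<inter> R = {} \<and> Y \<inter> Z = {} \<and> R \<inter> Z = {}"
    let ?Q = "\<lambda>A Y f. cc f (A \<union> R) Z \<and> cc f Y Z"
    let ?K = "\<lambda>b' M'. fC (card R) b' (card Z) (int M') * real (NN M')"
    have inv: "?Inv S B Y" using B S D unfolding R_def by auto
    have "real (card {f\<in>mt S. (\<forall>x\<in>B. f x \<in> Y) \<and> ?Q B Y f}) =
        real (card Y choose card B) * fact (card B) * ?K (card Y - card B) (M - card B)"
    proof (rule into_count[where Inv = ?Inv and Q = ?Q])
      show "?Inv S B Y" by (rule inv)
      show "card S = 2 * M" by (rule S(2))
    next
      fix S' A' Y' x y f assume I: "?Inv S' A' Y'" and x: "x \<in> A'" and y: "y \<in> Y'" and f: "f \<in> mt S'" "f x = y"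
      have fy: "f y = x" using mt_invol[OF f(1), of x] f(2) by simp
      have c1: "cc f (A' \<union> R) Z = cc (restr f {x, y}) ((A' - {x}) \<union> R) Z"
      proof
        assume "cc f (A' \<union> R) Z"
        then obtain w where w: "w \<in> A' \<union> R" "f w \<in> Z" unfolding cc_def by auto
        have "w \<noteq> x" using w f y I by auto
        moreover have "w \<noteq> y" using w y I by auto
        ultimately show "cc (restr f {x, y}) ((A' - {x}) \<union> R) Z" unfolding cc_def restr_def using w by auto
      next
        assume "cc (restr f {x, y}) ((A' - {x}) \<union> R) Z"
        then obtain w where w: "w \<in> (A' - {x}) \<union> R" "restr f {x, y} w \<in> Z" unfolding cc_def by auto
        have "w \<noteq> x" using w x I by auto
        moreover have "w \<noteq> y" using w y I by auto
        ultimately have "f w \<in> Z" using w(2) unfolding restr_def by simp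
        then show "cc f (A' \<union> R) Z" unfolding cc_def using w(1) by auto
      qed
      have c2: "cc f Y' Z = cc (restr f {x, y}) (Y' - {y}) Z"
      proof
        assume "cc f Y' Z"
        then obtain w where w: "w \<in> Y'" "f w \<in> Z" unfolding cc_def by auto
        have "w \<noteq> y" using w fy x I by auto
        moreover have "w \<noteq> x" using w x I by auto
        ultimately show "cc (restr f {x, y}) (Y' - {y}) Z" unfolding cc_def restr_def using w by auto
      next
        assume "cc (restr f {x, y}) (Y' - {y}) Z"
        then obtain w where w: "w \<in> Y' - {y}" "restr f {x, y} w \<in> Z" unfolding cc_def by auto
        have "w \<noteq> x" using w x I by auto
        then have "f w \<in> Z" using w unfolding restr_def by simp
        then show "cc f Y' Z" unfolding cc_def using w(1) by auto
      qed
      show "?Q A' Y' f = ?Q (A' - {x}) (Y' - {y}) (restr f {x, y})" using c1 c2 by simp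
    next
      fix S' Y' M' assume I: "?Inv S' {} Y'" "card S' = 2 * M'"
      then show "real (card {f\<in>mt S'. ?Q {} Y' f}) = ?K (card Y') M'"
        using thmC[of S' M' R Y' Z] by (auto simp: Int_commute)
    qed auto
    then show "real (card {f\<in>mt S. (\<forall>x\<in>B. f x \<in> Y) \<and> (cc f X Z \<and> cc f Y Z)}) =
        real (card Y choose card B) * fact (card B) *
        (\<lambda>t b' M'. fC (card X - t) b' (card Z) (int M') * real (NN M')) (card B) (card Y - card B) (M - card B)"
      unfolding BR cR by simp
  qed
  then show ?thesis unfolding eq by simp
qed

lemma fC_0: "fC 0 b c M = 0"
  unfolding fC_def fA_def by simp

lemma fC_0b: "fC a 0 c M = 0"
  unfolding fC_def by simp

lemma thmT:
  assumes S: "finite S" "card S = 2 * M" "X \<subseteq> S" "Y \<subseteq> S" "Z \<subseteq> S"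
    and D: "X \<inter> Y = {}" "X \<inter> Z = {}" "Y \<inter> Z = {}"
  shows "real (card {f\<in>mt S. cc f X Z \<and> cc f Y Z \<and> cc f X Y}) = fT (card X) (card Y) (card Z) (int M) * real (NN M)"
proof -
  have le: "card X + card Y \<le> 2 * M" using card_disj_le[OF S(1,3,4) D(1)] S(2) by simp
  have "HH (card X) (card Y) (\<lambda>t b' M'. fC (card X - t) b' (card Z) (int M') * real (NN M')) M =
    (\<Sum>t=1..min (card X - 1) (card Y - 1). (-1) ^ (t + 1) * (\<lambda>t. fC (card X - t) (card Y - t) (card Z) (int M - int t)) t
       * (real (card X choose t) * real (card Y choose t) * fact t) / stubprod t (int M)) * real (NN M)"
  proof (rule HH_conv)
    fix t assume t: "min (card X - 1) (card Y - 1) < t" "t \<le> card X"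
    show "real (card Y choose t) * (fC (card X - t) (card Y - t) (card Z) (int (M - t)) * real (NN (M - t))) = 0"
    proof (cases "t = card X")
      case True then show ?thesis by (simp add: fC_0)
    next
      case False then have "card Y \<le> t" using t by auto
      then show ?thesis by (cases "t = card Y") (auto simp: fC_0b)
    qed
  next
    fix t assume t: "1 \<le> t" "t \<le> min (card X - 1) (card Y - 1)"
    then have "t \<le> M" using le by auto
    then show "fC (card X - t) (card Y - t) (card Z) (int (M - t)) * real (NN (M - t)) =
        fC (card X - t) (card Y - t) (card Z) (int M - int t) * real (NN (M - t))" by (simp add: of_nat_diff)
  qed (use le in auto)
  also have "\<dots> = fT (card X) (card Y) (card Z) (int M) * real (NN M)"
    unfolding fT_def by (simp add: ac_simps)
  finally show ?thesis using thmT0[OF S D] by simp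
qed


definition sx :: "'a set \<Rightarrow> ('a \<Rightarrow> 'a \<Rightarrow> bool) \<Rightarrow> 'a \<Rightarrow> ('a \<times> nat) set" where
  "sx V E u = {u} \<times> {..<deg V E u}"

lemma stubs_Sigma: "stubs V E = Sigma V (\<lambda>u. {..<deg V E u})"
  unfolding stubs_def by auto

lemma sx_sub: "u \<in> V \<Longrightarrow> sx V E u \<subseteq> stubs V E"
  unfolding sx_def stubs_def by auto

lemma sx_disj: "u \<noteq> v \<Longrightarrow> sx V E u \<inter> sx V E v = {}"
  unfolding sx_def by auto

lemma card_sx: "card (sx V E u) = deg V E u"
  unfolding sx_def by (simp add: card_cartesian_product)

lemma conn_cc: "cm_conn V E f u v = cc f (sx V E u) (sx V E v)"
  unfolding cm_conn_def cc_def sx_def by force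

lemma stub_matchings_mt: "stub_matchings V E = mt (stubs V E)"
  unfolding stub_matchings_def mt_def by simp

lemma finite_stubs: "finite V \<Longrightarrow> finite (stubs V E)"
  unfolding stubs_Sigma by auto

lemma card_stubs: "finite V \<Longrightarrow> card (stubs V E) = (\<Sum>u\<in>V. deg V E u)"
  unfolding stubs_Sigma by (simp add: card_SigmaI)

lemma handshake:
  assumes V: "finite V" and EV: "\<And>u v. E u v \<Longrightarrow> u \<in> V \<and> v \<in> V"
    and sym: "\<And>u v. E u v \<Longrightarrow> E v u" and irr: "\<And>u. \<not> E u u"
  shows "(\<Sum>u\<in>V. deg V E u) = 2 * num_edges V E"
proof -
  define D where "D = Sigma V (\<lambda>u. {v\<in>V. E u v})"
  define g where "g = (\<lambda>(u::'a, v::'a). {u, v})"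
  have finD: "finite D" unfolding D_def using V by auto
  have "(\<Sum>u\<in>V. deg V E u) = card D"
    unfolding D_def deg_def using V by (simp add: card_SigmaI)
  also have "card D = (\<Sum>e\<in>g ` D. card {d\<in>D. g d = e})"
    by (rule card_fibers[OF finD]) (use finD in auto)
  also have "\<dots> = (\<Sum>e\<in>g ` D. 2)"
  proof (rule sum.cong[OF refl])
    fix e assume "e \<in> g ` D"
    then obtain u v where uv: "(u, v) \<in> D" "e = {u, v}" unfolding g_def by auto
    have E1: "E u v" "u \<in> V" "v \<in> V" "u \<noteq> v" using uv irr unfolding D_def by auto
    have "{d\<in>D. g d = e} = {(u, v), (v, u)}"
    proof (intro equalityI subsetI)
      fix d assume "d \<in> {d\<in>D. g d = e}"
      then obtain a b where d: "d = (a, b)" "{a, b} = {u, v}" unfolding g_def uv(2) by (cases d) auto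
      then show "d \<in> {(u, v), (v, u)}" by (auto simp: doubleton_eq_iff)
    next
      fix d assume "d \<in> {(u, v), (v, u)}"
      then show "d \<in> {d\<in>D. g d = e}" using E1 sym[OF E1(1)] unfolding D_def g_def uv(2) by auto
    qed
    then show "card {d\<in>D. g d = e} = 2" using E1 by simp
  qed
  also have "\<dots> = 2 * card (g ` D)" by simp
  also have "g ` D = {{u, v} | u v. u \<in> V \<and> v \<in> V \<and> E u v}"
    unfolding g_def D_def by auto
  finally show ?thesis unfolding num_edges_def by simp
qed

lemma cc_sym: "f \<in> mt S \<Longrightarrow> cc f X Y = cc f Y X"
  unfolding cc_def by (metis mt_invol)

lemma cc_single:
  assumes "card X = 1" "cc f X Y" "cc f X Z" "Y \<inter> Z = {}"
  shows False
proof -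
  obtain a where "X = {a}" using assms(1) card_1_singletonE by blast
  then show False using assms unfolding cc_def by auto
qed

theorem theorem1:
  fixes V :: "'a set" and E :: "'a \<Rightarrow> 'a \<Rightarrow> bool" and i j :: 'a
  assumes "finite V"
    and "\<And>u v. E u v \<Longrightarrow> u \<in> V \<and> v \<in> V"
    and "\<And>u v. E u v \<Longrightarrow> E v u"
    and "\<And>u. \<not> E u u"
    and "num_edges V E \<ge> 1"
    and "i \<in> V" and "j \<in> V" and "i \<noteq> j"
    and "deg V E i \<ge> 1" and "deg V E j \<ge> 1"
  defines "Padj \<equiv> measure_pmf.prob (config_model V E) {f. cm_conn V E f i j}"
    and "Pcn \<equiv> \<lambda>r. measure_pmf.prob (config_model V E)
                   {f. cm_conn V E f i r \<and> cm_conn V E f j r}"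
    and "Ptri \<equiv> \<lambda>r. measure_pmf.prob (config_model V E)
                   {f. cm_conn V E f i r \<and> cm_conn V E f j r \<and> cm_conn V E f i j}"
    and "EW \<equiv> measure_pmf.expectation (config_model V E) (\<lambda>f. weight V E f i j)"
  shows "((deg V E i = 1 \<or> deg V E j = 1) \<longrightarrow>
            EW = Pij V E i j * (\<Sum>r \<in> V - {i, j}. Pcn r) / 4 + Pij V E i j * Padj)
       \<and> ((deg V E i > 1 \<and> deg V E j > 1) \<longrightarrow>
            EW = Pij V E i j / 4 * (\<Sum>r \<in> V - {i, j}. Pcn r - Ptri r)
                 + 2 * Pij V E i j * (\<Sum>r \<in> V - {i, j}. Ptri r)
                 + 3 * Pij V E i j * Padj)
       \<and> Padj = fA (deg V E i) (deg V E j) (int (num_edges V E))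
       \<and> (\<forall>r \<in> V - {i, j}.
            Pcn r = fC (deg V E i) (deg V E j) (deg V E r) (int (num_edges V E))
          \<and> Ptri r = fT (deg V E i) (deg V E j) (deg V E r) (int (num_edges V E)))"
proof -
  define S where "S = stubs V E"
  define m where "m = num_edges V E"
  define Ms where "Ms = mt S"
  define X where "X = sx V E"
  have finS: "finite S" unfolding S_def using finite_stubs assms(1) .
  have cardS: "card S = 2 * m" unfolding S_def m_def
    using card_stubs[OF assms(1)] handshake[of V E, OF assms(1) assms(2) assms(3) assms(4)] by simp
  have cardM: "card Ms = NN m" unfolding Ms_def using card_mt[OF finS cardS] .
  have Mfin: "finite Ms" unfolding Ms_def using finite_mt[OF finS] .
  have Mne: "Ms \<noteq> {}" using cardM NN_pos[of m] by auto
  have NNpos: "real (NN m) > 0" using NN_pos[of m] by simp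
  have cm: "config_model V E = pmf_of_set Ms"
    unfolding config_model_def stub_matchings_mt Ms_def S_def ..
  have prob: "measure_pmf.prob (config_model V E) {f. Q f} = real (card {f\<in>Ms. Q f}) / real (NN m)" for Q
  proof -
    have "Ms \<inter> {f. Q f} = {f\<in>Ms. Q f}" by auto
    then show ?thesis unfolding cm measure_pmf_of_set[OF Mne Mfin] cardM by simp
  qed
  have cardsum: "real (card {f\<in>Ms. Q f}) = (\<Sum>f\<in>Ms. of_bool (Q f))" for Q
  proof -
    have "Ms \<inter> {f. Q f} = {f\<in>Ms. Q f}" by auto
    moreover have "(\<Sum>f\<in>Ms. of_bool (Q f)) = (of_nat (card (Ms \<inter> {f. Q f})) :: real)"
      using Mfin by simp
    ultimately show ?thesis by simp
  qed
  have XS: "X u \<subseteq> S" if "u \<in> V" for u unfolding X_def S_def using that by (rule sx_sub)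
  have Xd: "X u \<inter> X v = {}" if "u \<noteq> v" for u v unfolding X_def using that by (rule sx_disj)
  have cX: "card (X u) = deg V E u" for u unfolding X_def by (rule card_sx)
  have conn: "cm_conn V E f u v = cc f (X u) (X v)" for f u v unfolding X_def by (rule conn_cc)
  have Padj: "Padj = real (card {f\<in>Ms. cc f (X i) (X j)}) / real (NN m)"
    unfolding assms(11) conn prob ..
  have Pcn: "Pcn r = real (card {f\<in>Ms. cc f (X i) (X r) \<and> cc f (X j) (X r)}) / real (NN m)" for r
    unfolding assms(12) conn prob ..
  have Ptri: "Ptri r = real (card {f\<in>Ms. cc f (X i) (X r) \<and> cc f (X j) (X r) \<and> cc f (X i) (X j)}) / real (NN m)" for r
    unfolding assms(13) conn prob ..
  have EW: "EW = (\<Sum>f\<in>Ms. weight V E f i j) / real (NN m)"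
    unfolding assms(14) cm integral_pmf_of_set[OF Mne Mfin] cardM ..
  have part3: "Padj = fA (deg V E i) (deg V E j) (int (num_edges V E))"
    using thmA[OF finS cardS XS[OF assms(6)] XS[OF assms(7)] Xd[OF assms(8)]] NNpos
    unfolding Padj cX m_def Ms_def by simp
  have part4: "\<forall>r \<in> V - {i, j}.
            Pcn r = fC (deg V E i) (deg V E j) (deg V E r) (int (num_edges V E))
          \<and> Ptri r = fT (deg V E i) (deg V E j) (deg V E r) (int (num_edges V E))"
  proof
    fix r assume r: "r \<in> V - {i, j}"
    have d: "X i \<inter> X j = {}" "X i \<inter> X r = {}" "X j \<inter> X r = {}" using Xd r assms(8) by auto
    have s: "X r \<subseteq> S" using XS r by auto
    show "Pcn r = fC (deg V E i) (deg V E j) (deg V E r) (int (num_edges V E))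
          \<and> Ptri r = fT (deg V E i) (deg V E j) (deg V E r) (int (num_edges V E))"
      using thmC[OF finS cardS XS[OF assms(6)] XS[OF assms(7)] s d]
        thmT[OF finS cardS XS[OF assms(6)] XS[OF assms(7)] s d] NNpos
      unfolding Pcn Ptri cX m_def Ms_def by simp
  qed
  define ind where "ind r f = (of_bool (cc f (X i) (X r) \<and> cc f (X j) (X r)) :: real)" for r f
  define adj where "adj f = (of_bool (cc f (X i) (X j)) :: real)" for f
  define tri where "tri r f = (of_bool (cc f (X i) (X r) \<and> cc f (X j) (X r) \<and> cc f (X i) (X j)) :: real)" for r f
  have PcnS: "Pcn r = (\<Sum>f\<in>Ms. ind r f) / real (NN m)" for r unfolding Pcn cardsum ind_def ..
  have PtriS: "Ptri r = (\<Sum>f\<in>Ms. tri r f) / real (NN m)" for r unfolding Ptri cardsum tri_def ..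
  have PadjS: "Padj = (\<Sum>f\<in>Ms. adj f) / real (NN m)" unfolding Padj cardsum adj_def ..
  have finR: "finite (V - {i, j})" using assms(1) by simp
  have cn: "real (cm_common V E f i j) = (\<Sum>r\<in>V - {i, j}. ind r f)" for f
  proof -
    have "{r \<in> V. r \<noteq> i \<and> r \<noteq> j \<and> cm_conn V E f i r \<and> cm_conn V E f j r} =
        (V - {i, j}) \<inter> {r. cc f (X i) (X r) \<and> cc f (X j) (X r)}" by (auto simp: conn)
    moreover have "(\<Sum>r\<in>V - {i, j}. ind r f) = real (card ((V - {i, j}) \<inter> {r. cc f (X i) (X r) \<and> cc f (X j) (X r)}))"
      unfolding ind_def using finR by simp
    ultimately show ?thesis unfolding cm_common_def by simp
  qed
  have wgen: "weight V E f i j = (if cc f (X i) (X j) then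
      (if deg V E i = 1 \<or> deg V E j = 1 then Pij V E i j else 2 * ((\<Sum>r\<in>V - {i, j}. ind r f) + 1) * Pij V E i j + Pij V E i j)
      else Pij V E i j / 4 * (\<Sum>r\<in>V - {i, j}. ind r f))" for f
    unfolding weight_def CNij_def cn conn by (simp add: algebra_simps)
  have part1: "(deg V E i = 1 \<or> deg V E j = 1) \<longrightarrow>
            EW = Pij V E i j * (\<Sum>r \<in> V - {i, j}. Pcn r) / 4 + Pij V E i j * Padj"
  proof
    assume h: "deg V E i = 1 \<or> deg V E j = 1"
    have w1: "weight V E f i j = Pij V E i j / 4 * (\<Sum>r\<in>V - {i, j}. ind r f) + Pij V E i j * adj f"
      if fM: "f \<in> Ms" for f
    proof (cases "cc f (X i) (X j)")
      case True
      have "(\<Sum>r\<in>V - {i, j}. ind r f) = 0"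
      proof (rule sum.neutral, rule ballI)
        fix r assume r: "r \<in> V - {i, j}"
        have "\<not> (cc f (X i) (X r) \<and> cc f (X j) (X r))"
        proof
          assume a: "cc f (X i) (X r) \<and> cc f (X j) (X r)"
          from h show False
          proof
            assume "deg V E i = 1"
            then show False using cc_single[of "X i" f "X j" "X r"] True a Xd[of j r] r cX[of i] by auto
          next
            assume d1: "deg V E j = 1"
            have "cc f (X j) (X i)" using cc_sym[of f S "X i" "X j"] True fM unfolding Ms_def by simp
            then show False using cc_single[of "X j" f "X i" "X r"] d1 a Xd[of i r] r cX[of j] by auto
          qed
        qed
        then show "ind r f = 0" unfolding ind_def by simp
      qed
      then show ?thesis using True h by (simp add: wgen adj_def)
    next
      case False
      then show ?thesis by (simp add: wgen adj_def)
    qed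
    have "(\<Sum>f\<in>Ms. weight V E f i j) = (\<Sum>f\<in>Ms. Pij V E i j / 4 * (\<Sum>r\<in>V - {i, j}. ind r f) + Pij V E i j * adj f)"
      by (rule sum.cong[OF refl]) (rule w1)
    also have "\<dots> = Pij V E i j / 4 * (\<Sum>f\<in>Ms. \<Sum>r\<in>V - {i, j}. ind r f) + Pij V E i j * (\<Sum>f\<in>Ms. adj f)"
      by (simp add: sum.distrib sum_distrib_left)
    also have "(\<Sum>f\<in>Ms. \<Sum>r\<in>V - {i, j}. ind r f) = (\<Sum>r\<in>V - {i, j}. \<Sum>f\<in>Ms. ind r f)"
      by (rule sum.swap)
    finally have sw: "(\<Sum>f\<in>Ms. weight V E f i j) = Pij V E i j / 4 * (\<Sum>r\<in>V - {i, j}. \<Sum>f\<in>Ms. ind r f) + Pij V E i j * (\<Sum>f\<in>Ms. adj f)" .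
    show "EW = Pij V E i j * (\<Sum>r \<in> V - {i, j}. Pcn r) / 4 + Pij V E i j * Padj"
      unfolding EW PcnS PadjS sw using NNpos by (simp add: sum_divide_distrib[symmetric] field_simps)
  qed
  have part2: "(deg V E i > 1 \<and> deg V E j > 1) \<longrightarrow>
            EW = Pij V E i j / 4 * (\<Sum>r \<in> V - {i, j}. Pcn r - Ptri r)
                 + 2 * Pij V E i j * (\<Sum>r \<in> V - {i, j}. Ptri r)
                 + 3 * Pij V E i j * Padj"
  proof
    assume h: "deg V E i > 1 \<and> deg V E j > 1"
    have w2: "weight V E f i j = Pij V E i j / 4 * (\<Sum>r\<in>V - {i, j}. ind r f - tri r f)
        + 2 * Pij V E i j * (\<Sum>r\<in>V - {i, j}. tri r f) + 3 * Pij V E i j * adj f" for f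
    proof (cases "cc f (X i) (X j)")
      case True
      then have t: "tri r f = ind r f" for r unfolding tri_def ind_def by simp
      show ?thesis using True h by (simp add: wgen adj_def t algebra_simps)
    next
      case False
      then have t: "tri r f = 0" for r unfolding tri_def by simp
      show ?thesis using False by (simp add: wgen adj_def t)
    qed
    have "(\<Sum>f\<in>Ms. weight V E f i j) = (\<Sum>f\<in>Ms. Pij V E i j / 4 * (\<Sum>r\<in>V - {i, j}. ind r f - tri r f)
        + 2 * Pij V E i j * (\<Sum>r\<in>V - {i, j}. tri r f) + 3 * Pij V E i j * adj f)"
      by (rule sum.cong[OF refl]) (rule w2)
    also have "\<dots> = Pij V E i j / 4 * (\<Sum>f\<in>Ms. \<Sum>r\<in>V - {i, j}. ind r f - tri r f)
        + 2 * Pij V E i j * (\<Sum>f\<in>Ms. \<Sum>r\<in>V - {i, j}. tri r f) + 3 * Pij V E i j * (\<Sum>f\<in>Ms. adj f)"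
      by (simp add: sum.distrib sum_distrib_left)
    also have "(\<Sum>f\<in>Ms. \<Sum>r\<in>V - {i, j}. ind r f - tri r f) = (\<Sum>r\<in>V - {i, j}. (\<Sum>f\<in>Ms. ind r f) - (\<Sum>f\<in>Ms. tri r f))"
      by (subst sum.swap) (simp add: sum_subtractf)
    also have "(\<Sum>f\<in>Ms. \<Sum>r\<in>V - {i, j}. tri r f) = (\<Sum>r\<in>V - {i, j}. \<Sum>f\<in>Ms. tri r f)"
      by (rule sum.swap)
    finally have sw: "(\<Sum>f\<in>Ms. weight V E f i j) = Pij V E i j / 4 * (\<Sum>r\<in>V - {i, j}. (\<Sum>f\<in>Ms. ind r f) - (\<Sum>f\<in>Ms. tri r f))
        + 2 * Pij V E i j * (\<Sum>r\<in>V - {i, j}. \<Sum>f\<in>Ms. tri r f) + 3 * Pij V E i j * (\<Sum>f\<in>Ms. adj f)" .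
    have d: "Pcn r - Ptri r = ((\<Sum>f\<in>Ms. ind r f) - (\<Sum>f\<in>Ms. tri r f)) / real (NN m)" for r
      unfolding PcnS PtriS by (simp add: diff_divide_distrib)
    show "EW = Pij V E i j / 4 * (\<Sum>r \<in> V - {i, j}. Pcn r - Ptri r)
                 + 2 * Pij V E i j * (\<Sum>r \<in> V - {i, j}. Ptri r)
                 + 3 * Pij V E i j * Padj"
      unfolding EW d unfolding PtriS PadjS sw using NNpos by (simp add: sum_divide_distrib[symmetric] field_simps)
  qed
  show ?thesis using part1 part2 part3 part4 by blast
qed

end
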